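(* Let $G$ be a group, $k$ a commutative ring and $R=\bigoplus_{\rho\in G}R_\rho$ a $G$-graded $k$-algebra; for $t\in R$ let $t_\rho$ denote its homogeneous component of degree $\rho$. Let $\mathcal C=R\otimes_k kG$ be the $R$-coring with bimodule structure $r(s\otimes\sigma)t=\sum_{\rho\in G}rst_\rho\otimes\sigma\rho$, comultiplication $\Delta(s\otimes\sigma)=(s\otimes\sigma)\otimes_R(1\otimes\sigma)$ and counit $\varepsilon(s\otimes\sigma)=s$. Identify ${}^*\mathcal C={}_R\mathrm{Hom}(\mathcal C,R)$ with the ring $\mathrm{Map}(G,R)$ of all functions $G\to R$ with multiplication $(f\#g)(\tau)=\sum_{\rho\in G}f(\tau)_\rho\,g(\tau\rho)$, and for $\sigma\in G$ let $v_\sigma\in\mathrm{Map}(G,R)$ be given by $v_\sigma(\tau)=\delta_{\sigma,\tau}$. Then for every right $\mathrm{Map}(G,R)$-module $M$, $$\mathrm{Rat}^{\mathcal C}(M)=\bigoplus_{\sigma\in G}M\cdot v_\sigma,$$ where the sum is direct, and this is a $G$-graded right $R$-module with $(M\cdot v_\sigma)R_\rho\subseteq M\cdot v_{\sigma\rho}$ (with $R$ acting through the embedding $r\mapsto(\sigma\mapsto r)$ of $R$ into $\mathrm{Map}(G,R)$). In particular $\mathrm{Rat}^{\mathcal C}$ is exact.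
   Context: For a ring $R$ and an $R$-coring $\mathcal C$ (an $R$-bimodule with coassociative counital bimodule maps $\Delta:\mathcal C\to\mathcal C\otimes_R\mathcal C$, $\varepsilon:\mathcal C\to R$, $\Delta(c)=c_{(1)}\otimes c_{(2)}$), ${}^*\mathcal C={}_R\mathrm{Hom}(\mathcal C,R)$ is a ring with product $(f\#g)(c)=g(c_{(1)}f(c_{(2)}))$. For a right ${}^*\mathcal C$-module $M$, $\mathrm{Rat}^{\mathcal C}(M)$ is the set of $m\in M$ for which there is $\sum_i m_i\otimes c_i\in M\otimes_R\mathcal C$ with $m\cdot f=\sum_i m_if(c_i)$ for all $f\in{}^*\mathcal C$. The identification ${}^*\mathcal C\cong\mathrm{Map}(G,R)$ sends $\varphi$ to $\sigma\mapsto\varphi(1\otimes\sigma)$. *)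

theory Defs
  imports Main
begin

text \<open>The group G is a type of class group_add (written additively:
  the product sigma rho is written sigma + rho, the unit is 0; commutativity
  is NOT assumed).\<close>

definition graded_ring :: "('g::group_add \<Rightarrow> 'r::ring_1 set) \<Rightarrow> bool" where
  "graded_ring Rg \<longleftrightarrow>
     (\<forall>\<rho>. 0 \<in> Rg \<rho> \<and> (\<forall>x\<in>Rg \<rho>. \<forall>y\<in>Rg \<rho>. x - y \<in> Rg \<rho>)) \<and>
     (\<forall>\<rho> \<tau>. \<forall>x\<in>Rg \<rho>. \<forall>y\<in>Rg \<tau>. x * y \<in> Rg (\<rho> + \<tau>)) \<and>
     (\<forall>t. \<exists>!c. finite {\<rho>. c \<rho> \<noteq> 0} \<and> (\<forall>\<rho>. c \<rho> \<in> Rg \<rho>) \<and>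
                 t = (\<Sum>\<rho>\<in>{\<rho>. c \<rho> \<noteq> 0}. c \<rho>))"

definition graded_algebra :: "('k::comm_ring_1 \<Rightarrow> 'r::ring_1) \<Rightarrow> ('g::group_add \<Rightarrow> 'r set) \<Rightarrow> bool" where
  "graded_algebra alg Rg \<longleftrightarrow>
     graded_ring Rg \<and>
     alg 1 = 1 \<and> (\<forall>a b. alg (a + b) = alg a + alg b) \<and> (\<forall>a b. alg (a * b) = alg a * alg b) \<and>
     (\<forall>a r. alg a * r = r * alg a) \<and>
     (\<forall>a \<rho>. \<forall>x\<in>Rg \<rho>. alg a * x \<in> Rg \<rho>)"

definition hcomp :: "('g::group_add \<Rightarrow> 'r::ring_1 set) \<Rightarrow> 'r \<Rightarrow> 'g \<Rightarrow> 'r" where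
  "hcomp Rg t = (THE c. finite {\<rho>. c \<rho> \<noteq> 0} \<and> (\<forall>\<rho>. c \<rho> \<in> Rg \<rho>) \<and>
                 t = (\<Sum>\<rho>\<in>{\<rho>. c \<rho> \<noteq> 0}. c \<rho>))"

definition smash :: "('g::group_add \<Rightarrow> 'r::ring_1 set) \<Rightarrow> ('g \<Rightarrow> 'r) \<Rightarrow> ('g \<Rightarrow> 'r) \<Rightarrow> ('g \<Rightarrow> 'r)" where
  "smash Rg f g = (\<lambda>\<tau>. \<Sum>\<rho>\<in>{\<rho>. hcomp Rg (f \<tau>) \<rho> \<noteq> 0}. hcomp Rg (f \<tau>) \<rho> * g (\<tau> + \<rho>))"

definition vfun :: "'g \<Rightarrow> 'g \<Rightarrow> 'r::ring_1" where
  "vfun \<sigma> = (\<lambda>\<tau>. if \<tau> = \<sigma> then 1 else 0)"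

definition embR :: "'r \<Rightarrow> 'g \<Rightarrow> 'r" where
  "embR r = (\<lambda>_. r)"

definition rmod :: "('g::group_add \<Rightarrow> 'r::ring_1 set) \<Rightarrow> ('m::ab_group_add \<Rightarrow> ('g \<Rightarrow> 'r) \<Rightarrow> 'm) \<Rightarrow> bool" where
  "rmod Rg act \<longleftrightarrow>
     (\<forall>m n f. act (m + n) f = act m f + act n f) \<and>
     (\<forall>m f g. act m (\<lambda>\<tau>. f \<tau> + g \<tau>) = act m f + act m g) \<and>
     (\<forall>m f g. act m (smash Rg f g) = act (act m f) g) \<and>
     (\<forall>m. act m (\<lambda>_. 1) = m)"

definition rmod_hom :: "('m1::ab_group_add \<Rightarrow> ('g \<Rightarrow> 'r) \<Rightarrow> 'm1) \<Rightarrow> ('m2::ab_group_add \<Rightarrow> ('g \<Rightarrow> 'r) \<Rightarrow> 'm2)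
     \<Rightarrow> ('m1 \<Rightarrow> 'm2) \<Rightarrow> bool" where
  "rmod_hom act1 act2 h \<longleftrightarrow> (\<forall>x y. h (x + y) = h x + h y) \<and> (\<forall>x \<phi>. h (act1 x \<phi>) = act2 (h x) \<phi>)"

text \<open>The coring C = R (x)_k kG is, as a left R-module, free on the elements 1 (x) sigma;
  an element is written as a finitely supported c : G -> R standing for
  sum_sigma c(sigma) (x) sigma.  Under the identification *C = Map(G,R) the functional
  phi acts by  phi(sum_sigma c(sigma) (x) sigma) = sum_sigma c(sigma) phi(sigma).\<close>
definition coring_elt :: "('g \<Rightarrow> 'r::zero) \<Rightarrow> bool" where
  "coring_elt c \<longleftrightarrow> finite {\<sigma>. c \<sigma> \<noteq> 0}"

definition pair_eval :: "('g \<Rightarrow> 'r::ring_1) \<Rightarrow> ('g \<Rightarrow> 'r) \<Rightarrow> 'r" where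
  "pair_eval \<phi> c = (\<Sum>\<sigma>\<in>{\<sigma>. c \<sigma> \<noteq> 0}. c \<sigma> * \<phi> \<sigma>)"

text \<open>Rat^C(M): m such that there is sum_i m_i (x) c_i in M (x)_R C with
  m . f = sum_i m_i f(c_i) for all f in *C = Map(G,R); here m_i f(c_i) means
  m_i acted on by the image of f(c_i) in Map(G,R) under the embedding of R.\<close>
definition Rat :: "('m::ab_group_add \<Rightarrow> ('g \<Rightarrow> 'r::ring_1) \<Rightarrow> 'm) \<Rightarrow> 'm set" where
  "Rat act = {m. \<exists>ps :: ('m \<times> ('g \<Rightarrow> 'r)) list.
       (\<forall>p\<in>set ps. coring_elt (snd p)) \<and>
       (\<forall>\<phi>. act m \<phi> = (\<Sum>p\<leftarrow>ps. act (fst p) (embR (pair_eval \<phi> (snd p)))))}"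

definition Mv :: "('m \<Rightarrow> ('g \<Rightarrow> 'r::ring_1) \<Rightarrow> 'm) \<Rightarrow> 'g \<Rightarrow> 'm set" where
  "Mv act \<sigma> = range (\<lambda>m. act m (vfun \<sigma>))"

definition sum_Mv :: "('m::ab_group_add \<Rightarrow> ('g \<Rightarrow> 'r::ring_1) \<Rightarrow> 'm) \<Rightarrow> 'm set" where
  "sum_Mv act = {x. \<exists>S g. finite S \<and> (\<forall>\<sigma>\<in>S. g \<sigma> \<in> Mv act \<sigma>) \<and> x = sum g S}"

definition direct_Mv :: "('m::ab_group_add \<Rightarrow> ('g \<Rightarrow> 'r::ring_1) \<Rightarrow> 'm) \<Rightarrow> bool" where
  "direct_Mv act \<longleftrightarrow> (\<forall>S g. finite S \<longrightarrow> (\<forall>\<sigma>\<in>S. g \<sigma> \<in> Mv act \<sigma>) \<longrightarrow> sum g S = 0 \<longrightarrow>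
                          (\<forall>\<sigma>\<in>S. g \<sigma> = 0))"

end

theory Submission
  imports Defs
begin

lemma gr_unique:
  assumes "graded_ring Rg"
  shows "\<exists>!c. finite {\<rho>. c \<rho> \<noteq> 0} \<and> (\<forall>\<rho>. c \<rho> \<in> Rg \<rho>) \<and> t = (\<Sum>\<rho>\<in>{\<rho>. c \<rho> \<noteq> 0}. c \<rho>)"
  using assms unfolding graded_ring_def by blast

lemma hcomp_props:
  assumes "graded_ring Rg"
  shows "finite {\<rho>. hcomp Rg t \<rho> \<noteq> 0} \<and> (\<forall>\<rho>. hcomp Rg t \<rho> \<in> Rg \<rho>) \<and>
         t = (\<Sum>\<rho>\<in>{\<rho>. hcomp Rg t \<rho> \<noteq> 0}. hcomp Rg t \<rho>)"
  unfolding hcomp_def by (rule theI'[OF gr_unique[OF assms]])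

lemma hcomp_eq:
  assumes gr: "graded_ring Rg" and fin: "finite S" and sub: "{\<rho>. c \<rho> \<noteq> 0} \<subseteq> S"
    and hom: "\<forall>\<rho>. c \<rho> \<in> Rg \<rho>" and t: "t = sum c S"
  shows "hcomp Rg t = c"
proof -
  have f: "finite {\<rho>. c \<rho> \<noteq> 0}" using fin sub finite_subset by blast
  have "sum c S = sum c {\<rho>. c \<rho> \<noteq> 0}" by (rule sum.mono_neutral_right[OF fin sub]) auto
  hence P: "finite {\<rho>. c \<rho> \<noteq> 0} \<and> (\<forall>\<rho>. c \<rho> \<in> Rg \<rho>) \<and> t = (\<Sum>\<rho>\<in>{\<rho>. c \<rho> \<noteq> 0}. c \<rho>)"
    using f hom t by simp
  show ?thesis unfolding hcomp_def by (rule the1_equality[OF gr_unique[OF gr, of t]]) (rule P)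
qed

lemma gr_zero: "graded_ring Rg \<Longrightarrow> 0 \<in> Rg \<rho>"
  unfolding graded_ring_def by blast

lemma gr_mult: "graded_ring Rg \<Longrightarrow> x \<in> Rg \<rho> \<Longrightarrow> y \<in> Rg \<tau> \<Longrightarrow> x * y \<in> Rg (\<rho> + \<tau>)"
  unfolding graded_ring_def by blast

lemma hcomp_hom:
  assumes gr: "graded_ring Rg" and r: "r \<in> Rg \<rho>"
  shows "hcomp Rg r = (\<lambda>\<rho>'. if \<rho>' = \<rho> then r else 0)"
  by (rule hcomp_eq[OF gr, of "{\<rho>}"]) (auto simp: r gr_zero[OF gr])

lemma hcomp_zero:
  assumes gr: "graded_ring Rg"
  shows "hcomp Rg 0 = (\<lambda>_. 0)"
  by (rule hcomp_eq[OF gr, of "{}"]) (auto simp: gr_zero[OF gr])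

lemma one_R0:
  assumes gr: "graded_ring Rg"
  shows "1 \<in> Rg 0"
proof -
  define e where "e = hcomp Rg 1"
  define S where "S = {\<rho>. e \<rho> \<noteq> 0}"
  have fS: "finite S" and eh: "\<forall>\<rho>. e \<rho> \<in> Rg \<rho>" and one: "1 = sum e S"
    using hcomp_props[OF gr, of 1] by (auto simp: e_def S_def)
  have stepa: "x * e \<rho> = 0" if x: "x \<in> Rg \<tau>" and rho: "\<rho> \<noteq> 0" for x \<tau> \<rho>
  proof -
    define c where "c = (\<lambda>\<rho>'. x * e (-\<tau> + \<rho>'))"
    have ch: "\<forall>\<rho>'. c \<rho>' \<in> Rg \<rho>'"
    proof
      fix \<rho>'
      have "c \<rho>' \<in> Rg (\<tau> + (-\<tau>+\<rho>'))" unfolding c_def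
        by (rule gr_mult[OF gr x eh[rule_format]])
      thus "c \<rho>' \<in> Rg \<rho>'" by simp
    qed
    have fT: "finite ((+) \<tau> ` S)" using fS by simp
    have sub: "{\<rho>'. c \<rho>' \<noteq> 0} \<subseteq> (+) \<tau> ` S"
    proof
      fix \<rho>' assume "\<rho>' \<in> {\<rho>'. c \<rho>' \<noteq> 0}"
      hence "e (-\<tau>+\<rho>') \<noteq> 0" by (auto simp: c_def)
      hence "-\<tau>+\<rho>' \<in> S" by (simp add: S_def)
      moreover have "\<rho>' = \<tau> + (-\<tau>+\<rho>')" by simp
      ultimately show "\<rho>' \<in> (+) \<tau> ` S" by blast
    qed
    have "sum c ((+) \<tau> ` S) = sum (c \<circ> (+) \<tau>) S" by (rule sum.reindex) (simp add: inj_on_def)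
    also have "\<dots> = sum (\<lambda>\<rho>. x * e \<rho>) S" by (simp add: c_def comp_def)
    also have "\<dots> = x * sum e S" by (simp add: sum_distrib_left)
    also have "\<dots> = x" using one[symmetric] by simp
    finally have "hcomp Rg x = c" using hcomp_eq[OF gr fT sub ch] by simp
    moreover have "hcomp Rg x = (\<lambda>\<rho>'. if \<rho>' = \<tau> then x else 0)" by (rule hcomp_hom[OF gr x])
    ultimately have cc: "c (\<tau>+\<rho>) = (if \<tau>+\<rho> = \<tau> then x else 0)" by metis
    have ne: "\<tau> + \<rho> \<noteq> \<tau>"
    proof
      assume "\<tau> + \<rho> = \<tau>"
      then have "-\<tau> + (\<tau>+\<rho>) = -\<tau> + \<tau>" by simp
      thus False using rho by simp
    qed
    have "c (\<tau>+\<rho>) = x * e \<rho>" by (simp add: c_def)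
    thus ?thesis using cc ne by simp
  qed
  have eS: "S \<subseteq> {0}"
  proof
    fix \<rho> assume rS: "\<rho> \<in> S"
    show "\<rho> \<in> {0}"
    proof (rule ccontr)
      assume "\<rho> \<notin> {0}" hence r: "\<rho> \<noteq> 0" by simp
      have "e \<rho> = sum e S * e \<rho>" using one[symmetric] by simp
      also have "\<dots> = (\<Sum>\<tau>\<in>S. e \<tau> * e \<rho>)" by (simp add: sum_distrib_right)
      also have "\<dots> = 0" by (rule sum.neutral) (simp add: stepa[OF eh[rule_format] r])
      finally show False using rS by (simp add: S_def)
    qed
  qed
  show ?thesis
  proof (cases "S = {}")
    case True thus ?thesis using one gr_zero[OF gr] by simp
  next
    case False hence "S = {0}" using eS by blast
    thus ?thesis using one eh[rule_format, of 0] by simp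
  qed
qed

lemma sum_supp:
  assumes "finite S" "{\<rho>. c \<rho> \<noteq> 0} \<subseteq> S" "\<And>\<rho>. c \<rho> = 0 \<Longrightarrow> F \<rho> = 0"
  shows "(\<Sum>\<rho>\<in>{\<rho>. c \<rho> \<noteq> 0}. F \<rho>) = sum F S"
  by (rule sum.mono_neutral_left) (use assms in auto)

lemma smash_v:
  assumes gr: "graded_ring Rg"
  shows "smash Rg (vfun \<sigma>) g = (\<lambda>\<tau>. if \<tau> = \<sigma> then g \<tau> else 0)"
proof (rule ext)
  fix \<tau>
  show "smash Rg (vfun \<sigma>) g \<tau> = (if \<tau> = \<sigma> then g \<tau> else 0)"
  proof (cases "\<tau> = \<sigma>")
    case True
    have h1: "hcomp Rg 1 = (\<lambda>\<rho>'. if \<rho>' = 0 then 1 else 0)" by (rule hcomp_hom[OF gr one_R0[OF gr]])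
    have "smash Rg (vfun \<sigma>) g \<tau> = (\<Sum>\<rho>\<in>{\<rho>. hcomp Rg 1 \<rho> \<noteq> 0}. hcomp Rg 1 \<rho> * g (\<tau> + \<rho>))"
      using True by (simp add: smash_def vfun_def)
    also have "\<dots> = (\<Sum>\<rho>\<in>{0}. hcomp Rg 1 \<rho> * g (\<tau> + \<rho>))"
      by (rule sum_supp) (auto simp: h1)
    finally show ?thesis using True h1 by simp
  next
    case False
    thus ?thesis by (simp add: smash_def vfun_def hcomp_zero[OF gr])
  qed
qed

lemma smash_vv:
  assumes gr: "graded_ring Rg"
  shows "smash Rg (vfun \<sigma>) (vfun \<tau>) = (if \<sigma> = \<tau> then vfun \<sigma> else (\<lambda>_. 0))"
  unfolding smash_v[OF gr] by (auto simp: vfun_def fun_eq_iff)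

lemma smash_embR_v:
  assumes gr: "graded_ring Rg" and r: "r \<in> Rg \<rho>"
  shows "smash Rg (embR r) (vfun \<mu>) = (\<lambda>\<tau>. if \<tau> + \<rho> = \<mu> then r else 0)"
proof (rule ext)
  fix \<tau>
  have "smash Rg (embR r) (vfun \<mu>) \<tau> =
     (\<Sum>\<rho>'\<in>{\<rho>'. hcomp Rg r \<rho>' \<noteq> 0}. hcomp Rg r \<rho>' * vfun \<mu> (\<tau> + \<rho>'))"
    by (simp add: smash_def embR_def)
  also have "\<dots> = (\<Sum>\<rho>'\<in>{\<rho>}. hcomp Rg r \<rho>' * vfun \<mu> (\<tau> + \<rho>'))"
    by (rule sum_supp) (auto simp: hcomp_hom[OF gr r])
  finally show "smash Rg (embR r) (vfun \<mu>) \<tau> = (if \<tau> + \<rho> = \<mu> then r else 0)"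
    by (simp add: hcomp_hom[OF gr r] vfun_def)
qed

lemma act_add_m: "rmod Rg act \<Longrightarrow> act (m + n) f = act m f + act n f"
  unfolding rmod_def by blast
lemma act_add_f: "rmod Rg act \<Longrightarrow> act m (\<lambda>\<tau>. f \<tau> + g \<tau>) = act m f + act m g"
  unfolding rmod_def by blast
lemma act_smash: "rmod Rg act \<Longrightarrow> act m (smash Rg f g) = act (act m f) g"
  unfolding rmod_def by blast
lemma act_one: "rmod Rg act \<Longrightarrow> act m (\<lambda>_. 1) = m"
  unfolding rmod_def by blast

lemma act_zero_m: "rmod Rg act \<Longrightarrow> act 0 f = 0"
  using act_add_m[of Rg act 0 0 f] by simp

lemma act_zero_f: "rmod Rg act \<Longrightarrow> act m (\<lambda>_. 0) = 0"
  using act_add_f[of Rg act m "\<lambda>_. 0" "\<lambda>_. 0"] by simp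

lemma act_sum_m: "rmod Rg act \<Longrightarrow> act (sum g S) f = (\<Sum>x\<in>S. act (g x) f)"
  by (induction S rule: infinite_finite_induct) (simp_all add: act_zero_m act_add_m)

lemma act_sum_f: "rmod Rg act \<Longrightarrow> act m (\<lambda>\<tau>. \<Sum>x\<in>S. F x \<tau>) = (\<Sum>x\<in>S. act m (F x))"
proof (induction S rule: infinite_finite_induct)
  case (infinite A) thus ?case by (simp add: act_zero_f)
next
  case empty thus ?case by (simp add: act_zero_f)
next
  case (insert x F')
  thus ?case using act_add_f[OF insert.prems, of m "F x" "\<lambda>\<tau>. \<Sum>x\<in>F'. F x \<tau>"] by simp
qed

lemma act_minus_f: "rmod Rg act \<Longrightarrow> act m (\<lambda>\<tau>. f \<tau> - g \<tau>) = act m f - act m g"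
  using act_add_f[of Rg act m "\<lambda>\<tau>. f \<tau> - g \<tau>" g] by simp

lemma pair_eval_S:
  assumes "finite S" "{\<sigma>. c \<sigma> \<noteq> 0} \<subseteq> S"
  shows "pair_eval \<phi> c = (\<Sum>\<sigma>\<in>S. c \<sigma> * \<phi> \<sigma>)"
  unfolding pair_eval_def by (rule sum_supp) (use assms in auto)

lemma sum_list_map_0: "\<forall>x\<in>set xs. f x = (0::'a::monoid_add) \<Longrightarrow> sum_list (map f xs) = 0"
  by (induction xs) auto

lemma Rat_decomp:
  fixes act :: "'m::ab_group_add \<Rightarrow> ('g::group_add \<Rightarrow> 'r::ring_1) \<Rightarrow> 'm"
  assumes md: "rmod Rg act" and m: "m \<in> Rat act"
  shows "\<exists>S. finite S \<and> m = (\<Sum>\<sigma>\<in>S. act m (vfun \<sigma>))"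
proof -
  obtain ps where cor: "\<forall>p\<in>set ps. coring_elt (snd p)"
    and eq: "\<forall>\<phi>. act m \<phi> = (\<Sum>p\<leftarrow>ps. act (fst p) (embR (pair_eval \<phi> (snd p))))"
    using m unfolding Rat_def by blast
  define S where "S = (\<Union>p\<in>set ps. {\<sigma>. snd p \<sigma> \<noteq> 0})"
  have fS: "finite S" using cor by (auto simp: S_def coring_elt_def)
  define \<chi> :: "'g \<Rightarrow> 'r" where "\<chi> = (\<lambda>\<tau>. \<Sum>\<sigma>\<in>S. vfun \<sigma> \<tau>)"
  have chi1: "\<chi> \<sigma> = 1" if "\<sigma> \<in> S" for \<sigma>
    using that fS by (simp add: \<chi>_def vfun_def)
  have pe0: "pair_eval (\<lambda>\<tau>. 1 - \<chi> \<tau>) (snd p) = 0" if p: "p \<in> set ps" for p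
  proof -
    have "{\<sigma>. snd p \<sigma> \<noteq> 0} \<subseteq> S" using p by (auto simp: S_def)
    hence "pair_eval (\<lambda>\<tau>. 1 - \<chi> \<tau>) (snd p) = (\<Sum>\<sigma>\<in>S. snd p \<sigma> * (1 - \<chi> \<sigma>))"
      by (rule pair_eval_S[OF fS])
    also have "\<dots> = 0" by (rule sum.neutral) (simp add: chi1)
    finally show ?thesis .
  qed
  have zz: "\<forall>p\<in>set ps. act (fst p) (embR (pair_eval (\<lambda>\<tau>. 1 - \<chi> \<tau>) (snd p))) = 0"
    by (simp add: pe0 embR_def act_zero_f[OF md])
  have "act m (\<lambda>\<tau>. 1 - \<chi> \<tau>) = (\<Sum>p\<leftarrow>ps. act (fst p) (embR (pair_eval (\<lambda>\<tau>. 1 - \<chi> \<tau>) (snd p))))"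
    by (rule eq[rule_format])
  also have "\<dots> = 0" by (rule sum_list_map_0[OF zz])
  finally have z: "act m (\<lambda>\<tau>. 1 - \<chi> \<tau>) = 0" .
  have "m = act m (\<lambda>\<tau>. (1 - \<chi> \<tau>) + \<chi> \<tau>)" using act_one[OF md, of m] by simp
  also have "\<dots> = act m \<chi>" using act_add_f[OF md, of m "\<lambda>\<tau>. 1 - \<chi> \<tau>" \<chi>] z by simp
  also have "\<dots> = (\<Sum>\<sigma>\<in>S. act m (vfun \<sigma>))" unfolding \<chi>_def by (rule act_sum_f[OF md])
  finally show ?thesis using fS by blast
qed

lemma Rat_zero: "rmod Rg act \<Longrightarrow> 0 \<in> Rat act"
  unfolding Rat_def by (rule CollectI, rule exI[of _ "[]"]) (simp add: act_zero_m)

lemma Rat_add: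
  assumes md: "rmod Rg act" and a: "a \<in> Rat act" and b: "b \<in> Rat act"
  shows "a + b \<in> Rat act"
proof -
  obtain ps where p1: "\<forall>p\<in>set ps. coring_elt (snd p)"
    and p2: "\<forall>\<phi>. act a \<phi> = (\<Sum>p\<leftarrow>ps. act (fst p) (embR (pair_eval \<phi> (snd p))))"
    using a unfolding Rat_def by blast
  obtain qs where q1: "\<forall>p\<in>set qs. coring_elt (snd p)"
    and q2: "\<forall>\<phi>. act b \<phi> = (\<Sum>p\<leftarrow>qs. act (fst p) (embR (pair_eval \<phi> (snd p))))"
    using b unfolding Rat_def by blast
  show ?thesis unfolding Rat_def
  proof (rule CollectI, rule exI[of _ "ps @ qs"], rule conjI)
    show "\<forall>p\<in>set (ps @ qs). coring_elt (snd p)" using p1 q1 by auto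
    show "\<forall>\<phi>. act (a + b) \<phi> = (\<Sum>p\<leftarrow>ps @ qs. act (fst p) (embR (pair_eval \<phi> (snd p))))"
      by (simp add: act_add_m[OF md] p2 q2)
  qed
qed

lemma Rat_sum:
  assumes md: "rmod Rg act"
  shows "(\<forall>\<sigma>\<in>S. g \<sigma> \<in> Rat act) \<Longrightarrow> sum g S \<in> Rat act"
  by (induction S rule: infinite_finite_induct) (simp_all add: Rat_zero[OF md] Rat_add[OF md])

lemma Mv_Rat:
  fixes act :: "'m::ab_group_add \<Rightarrow> ('g::group_add \<Rightarrow> 'r::ring_1) \<Rightarrow> 'm"
  assumes gr: "graded_ring Rg" and md: "rmod Rg act" and x: "x \<in> Mv act \<sigma>"
  shows "x \<in> Rat act"
proof -
  obtain m where xm: "x = act m (vfun \<sigma>)" using x unfolding Mv_def by blast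
  have ce: "coring_elt (vfun \<sigma> :: 'g \<Rightarrow> 'r)" unfolding coring_elt_def
    by (rule finite_subset[of _ "{\<sigma>}"]) (auto simp: vfun_def)
  have pe: "pair_eval \<phi> (vfun \<sigma> :: 'g \<Rightarrow> 'r) = \<phi> \<sigma>" for \<phi> :: "'g \<Rightarrow> 'r"
    by (subst pair_eval_S[of "{\<sigma>}"]) (auto simp: vfun_def)
  have key: "act x \<phi> = act x (embR (pair_eval \<phi> (vfun \<sigma>)))" for \<phi>
  proof -
    have "act x \<phi> = act m (smash Rg (vfun \<sigma>) \<phi>)" by (simp add: xm act_smash[OF md])
    also have "\<dots> = act m (smash Rg (vfun \<sigma>) (embR (\<phi> \<sigma>)))"
      by (rule arg_cong[where f="act m"]) (auto simp: smash_v[OF gr] embR_def fun_eq_iff)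
    also have "\<dots> = act x (embR (pair_eval \<phi> (vfun \<sigma>)))" by (simp add: xm act_smash[OF md] pe)
    finally show ?thesis .
  qed
  show ?thesis unfolding Rat_def
  proof (rule CollectI, rule exI[of _ "[(x, vfun \<sigma>)]"], rule conjI)
    show "\<forall>p\<in>set [(x, vfun \<sigma>)]. coring_elt (snd p)"
      unfolding coring_elt_def by simp (rule finite_subset[of _ "{\<sigma>}"], auto simp: vfun_def)
    show "\<forall>\<phi>. act x \<phi> = (\<Sum>p\<leftarrow>[(x, vfun \<sigma>)]. act (fst p) (embR (pair_eval \<phi> (snd p))))"
    proof
      fix \<phi>
      have h: "(\<Sum>p\<leftarrow>[(x, vfun \<sigma>)]. act (fst p) (embR (pair_eval \<phi> (snd p)))) = act x (embR (pair_eval \<phi> (vfun \<sigma>)))"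
        by simp
      show "act x \<phi> = (\<Sum>p\<leftarrow>[(x, vfun \<sigma>)]. act (fst p) (embR (pair_eval \<phi> (snd p))))"
        by (subst h) (rule key)
    qed
  qed
qed

lemma Rat_eq:
  assumes gr: "graded_ring Rg" and md: "rmod Rg act"
  shows "Rat act = sum_Mv act"
proof
  show "Rat act \<subseteq> sum_Mv act"
  proof
    fix m assume "m \<in> Rat act"
    then obtain S where fS: "finite S" and meq: "m = (\<Sum>\<sigma>\<in>S. act m (vfun \<sigma>))"
      using Rat_decomp[OF md] by blast
    show "m \<in> sum_Mv act" unfolding sum_Mv_def
    proof (intro CollectI exI[of _ S] exI[of _ "\<lambda>\<sigma>. act m (vfun \<sigma>)"] conjI)
      show "finite S" by (rule fS)
      show "\<forall>\<sigma>\<in>S. act m (vfun \<sigma>) \<in> Mv act \<sigma>" unfolding Mv_def by blast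
      show "m = (\<Sum>\<sigma>\<in>S. act m (vfun \<sigma>))" by (rule meq)
    qed
  qed
next
  show "sum_Mv act \<subseteq> Rat act"
  proof
    fix x assume "x \<in> sum_Mv act"
    then obtain S g where "finite S" and gS: "\<forall>\<sigma>\<in>S. g \<sigma> \<in> Mv act \<sigma>" and xe: "x = sum g S"
      unfolding sum_Mv_def by blast
    have "\<forall>\<sigma>\<in>S. g \<sigma> \<in> Rat act" using gS Mv_Rat[OF gr md] by blast
    thus "x \<in> Rat act" unfolding xe by (rule Rat_sum[OF md])
  qed
qed

lemma Mv_proj:
  assumes gr: "graded_ring Rg" and md: "rmod Rg act" and x: "x \<in> Mv act \<sigma>"
  shows "act x (vfun \<tau>) = (if \<sigma> = \<tau> then x else 0)"
proof -
  obtain m where xm: "x = act m (vfun \<sigma>)" using x unfolding Mv_def by blast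
  have "act x (vfun \<tau>) = act m (smash Rg (vfun \<sigma>) (vfun \<tau>))" by (simp add: xm act_smash[OF md])
  thus ?thesis by (cases "\<sigma> = \<tau>") (simp_all add: xm smash_vv[OF gr] act_zero_f[OF md])
qed

lemma hom_add: "rmod_hom a1 a2 f \<Longrightarrow> f (x + y) = f x + f y"
  unfolding rmod_hom_def by blast
lemma hom_act: "rmod_hom a1 a2 f \<Longrightarrow> f (a1 x \<phi>) = a2 (f x) \<phi>"
  unfolding rmod_hom_def by blast
lemma hom_zero: "rmod_hom a1 a2 (f :: 'a::ab_group_add \<Rightarrow> 'b::ab_group_add) \<Longrightarrow> f 0 = 0"
  using hom_add[of a1 a2 f 0 0] by simp
lemma hom_sum: "rmod_hom a1 a2 (f :: 'a::ab_group_add \<Rightarrow> 'b::ab_group_add) \<Longrightarrow> f (sum g S) = (\<Sum>x\<in>S. f (g x))"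
  by (induction S rule: infinite_finite_induct) (simp_all add: hom_zero hom_add)

lemma hom_Rat:
  fixes act1 :: "'a::ab_group_add \<Rightarrow> ('g::group_add \<Rightarrow> 'r::ring_1) \<Rightarrow> 'a"
    and act2 :: "'b::ab_group_add \<Rightarrow> ('g \<Rightarrow> 'r) \<Rightarrow> 'b"
  assumes gr: "graded_ring Rg" and m1: "rmod Rg act1" and m2: "rmod Rg act2"
    and hf: "rmod_hom act1 act2 f" and x: "x \<in> Rat act1"
  shows "f x \<in> Rat act2"
proof -
  obtain S where fS: "finite S" and xe: "x = (\<Sum>\<sigma>\<in>S. act1 x (vfun \<sigma>))"
    using Rat_decomp[OF m1 x] by blast
  have "f x = f (\<Sum>\<sigma>\<in>S. act1 x (vfun \<sigma>))" by (rule arg_cong[OF xe])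
  also have "\<dots> = (\<Sum>\<sigma>\<in>S. act2 (f x) (vfun \<sigma>))" by (simp add: hom_sum[OF hf] hom_act[OF hf])
  finally have fe: "f x = (\<Sum>\<sigma>\<in>S. act2 (f x) (vfun \<sigma>))" .
  have "\<forall>\<sigma>\<in>S. act2 (f x) (vfun \<sigma>) \<in> Rat act2"
    using Mv_Rat[OF gr m2] unfolding Mv_def by blast
  hence "(\<Sum>\<sigma>\<in>S. act2 (f x) (vfun \<sigma>)) \<in> Rat act2" by (rule Rat_sum[OF m2])
  thus ?thesis using fe by simp
qed

theorem mainTheorem10:
  fixes alg :: "'k::comm_ring_1 \<Rightarrow> 'r::ring_1"
    and Rg :: "'g::group_add \<Rightarrow> 'r set"
    and act :: "'m::ab_group_add \<Rightarrow> ('g \<Rightarrow> 'r) \<Rightarrow> 'm"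
  assumes "graded_algebra alg Rg"
    and "rmod Rg act"
  shows "Rat act = sum_Mv act \<and>
    direct_Mv act \<and>
    (\<forall>\<sigma> \<rho> x r. x \<in> Mv act \<sigma> \<longrightarrow> r \<in> Rg \<rho> \<longrightarrow> act x (embR r) \<in> Mv act (\<sigma> + \<rho>)) \<and>
    (\<forall>(act1 :: 'a::ab_group_add \<Rightarrow> ('g \<Rightarrow> 'r) \<Rightarrow> 'a)
          (act2 :: 'b::ab_group_add \<Rightarrow> ('g \<Rightarrow> 'r) \<Rightarrow> 'b)
          (act3 :: 'c::ab_group_add \<Rightarrow> ('g \<Rightarrow> 'r) \<Rightarrow> 'c) f h.
          rmod Rg act1 \<and> rmod Rg act2 \<and> rmod Rg act3 \<and>
          rmod_hom act1 act2 f \<and> rmod_hom act2 act3 h \<and>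
          inj f \<and> range f = {y. h y = 0} \<and> surj h \<longrightarrow>
          f ` Rat act1 \<subseteq> Rat act2 \<and> h ` Rat act2 \<subseteq> Rat act3 \<and>
          inj_on f (Rat act1) \<and>
          f ` Rat act1 = Rat act2 \<inter> {y. h y = 0} \<and>
          h ` Rat act2 = Rat act3)"
proof -
  have gr: "graded_ring Rg" using assms(1) unfolding graded_algebra_def by blast
  note md = assms(2)
  have A: "Rat act = sum_Mv act" by (rule Rat_eq[OF gr md])
  have B: "direct_Mv act" unfolding direct_Mv_def
  proof (intro allI impI ballI)
    fix S g \<tau>
    assume fS: "finite S" and gS: "\<forall>\<sigma>\<in>S. g \<sigma> \<in> Mv act \<sigma>" and s0: "sum g S = 0" and tS: "\<tau> \<in> S"
    have "0 = act (sum g S) (vfun \<tau>)" using s0 act_zero_m[OF md] by simp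
    also have "\<dots> = (\<Sum>\<sigma>\<in>S. act (g \<sigma>) (vfun \<tau>))" by (rule act_sum_m[OF md])
    also have "\<dots> = (\<Sum>\<sigma>\<in>S. if \<sigma> = \<tau> then g \<sigma> else 0)"
    proof (rule sum.cong)
      fix \<sigma> assume "\<sigma> \<in> S"
      show "act (g \<sigma>) (vfun \<tau>) = (if \<sigma> = \<tau> then g \<sigma> else 0)"
        by (rule Mv_proj[OF gr md gS[rule_format, OF \<open>\<sigma> \<in> S\<close>]])
    qed simp
    also have "\<dots> = g \<tau>" using fS tS by simp
    finally show "g \<tau> = 0" by simp
  qed
  have C: "\<forall>\<sigma> \<rho> x r. x \<in> Mv act \<sigma> \<longrightarrow> r \<in> Rg \<rho> \<longrightarrow> act x (embR r) \<in> Mv act (\<sigma> + \<rho>)"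
  proof (intro allI impI)
    fix \<sigma> \<rho> x r assume x: "x \<in> Mv act \<sigma>" and r: "r \<in> Rg \<rho>"
    obtain m where xm: "x = act m (vfun \<sigma>)" using x unfolding Mv_def by blast
    have "act x (embR r) = act m (smash Rg (vfun \<sigma>) (embR r))" by (simp add: xm act_smash[OF md])
    also have "\<dots> = act m (smash Rg (embR r) (vfun (\<sigma> + \<rho>)))"
      by (rule arg_cong[where f="act m"])
         (simp only: smash_v[OF gr] smash_embR_v[OF gr r], auto simp: embR_def fun_eq_iff)
    also have "\<dots> = act (act m (embR r)) (vfun (\<sigma> + \<rho>))" by (rule act_smash[OF md])
    finally show "act x (embR r) \<in> Mv act (\<sigma> + \<rho>)" unfolding Mv_def by (rule range_eqI)
  qed
  have D: "\<forall>(act1 :: 'a::ab_group_add \<Rightarrow> ('g \<Rightarrow> 'r) \<Rightarrow> 'a)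
          (act2 :: 'b::ab_group_add \<Rightarrow> ('g \<Rightarrow> 'r) \<Rightarrow> 'b)
          (act3 :: 'c::ab_group_add \<Rightarrow> ('g \<Rightarrow> 'r) \<Rightarrow> 'c) f h.
          rmod Rg act1 \<and> rmod Rg act2 \<and> rmod Rg act3 \<and>
          rmod_hom act1 act2 f \<and> rmod_hom act2 act3 h \<and>
          inj f \<and> range f = {y. h y = 0} \<and> surj h \<longrightarrow>
          f ` Rat act1 \<subseteq> Rat act2 \<and> h ` Rat act2 \<subseteq> Rat act3 \<and>
          inj_on f (Rat act1) \<and>
          f ` Rat act1 = Rat act2 \<inter> {y. h y = 0} \<and>
          h ` Rat act2 = Rat act3"
  proof (intro allI impI)
    fix act1 :: "'a::ab_group_add \<Rightarrow> ('g \<Rightarrow> 'r) \<Rightarrow> 'a"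
      and act2 :: "'b::ab_group_add \<Rightarrow> ('g \<Rightarrow> 'r) \<Rightarrow> 'b"
      and act3 :: "'c::ab_group_add \<Rightarrow> ('g \<Rightarrow> 'r) \<Rightarrow> 'c" and f h
    assume H: "rmod Rg act1 \<and> rmod Rg act2 \<and> rmod Rg act3 \<and>
          rmod_hom act1 act2 f \<and> rmod_hom act2 act3 h \<and>
          inj f \<and> range f = {y. h y = 0} \<and> surj h"
    hence m1: "rmod Rg act1" and m2: "rmod Rg act2" and m3: "rmod Rg act3"
      and hf: "rmod_hom act1 act2 f" and hh: "rmod_hom act2 act3 h"
      and injf: "inj f" and rng: "range f = {y. h y = 0}" and sh: "surj h" by auto
    have 1: "f ` Rat act1 \<subseteq> Rat act2" using hom_Rat[OF gr m1 m2 hf] by blast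
    have 2: "h ` Rat act2 \<subseteq> Rat act3" using hom_Rat[OF gr m2 m3 hh] by blast
    have 3: "inj_on f (Rat act1)" by (rule inj_on_subset[OF injf]) simp
    have 4: "f ` Rat act1 = Rat act2 \<inter> {y. h y = 0}"
    proof
      show "f ` Rat act1 \<subseteq> Rat act2 \<inter> {y. h y = 0}" using 1 rng by blast
    next
      show "Rat act2 \<inter> {y. h y = 0} \<subseteq> f ` Rat act1"
      proof
        fix y assume "y \<in> Rat act2 \<inter> {y. h y = 0}"
        hence y: "y \<in> Rat act2" and hy: "h y = 0" by auto
        obtain S where fS: "finite S" and ye: "y = (\<Sum>\<sigma>\<in>S. act2 y (vfun \<sigma>))"
          using Rat_decomp[OF m2 y] by blast
        have "\<forall>\<sigma>. \<exists>x. act2 y (vfun \<sigma>) = f x"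
        proof
          fix \<sigma>
          have "h (act2 y (vfun \<sigma>)) = 0" by (simp add: hom_act[OF hh] hy act_zero_m[OF m3])
          hence "act2 y (vfun \<sigma>) \<in> range f" using rng by blast
          thus "\<exists>x. act2 y (vfun \<sigma>) = f x" by blast
        qed
        then obtain xs where xs: "\<forall>\<sigma>. act2 y (vfun \<sigma>) = f (xs \<sigma>)" by metis
        define x where "x = (\<Sum>\<sigma>\<in>S. act1 (xs \<sigma>) (vfun \<sigma>))"
        have "\<forall>\<sigma>\<in>S. act1 (xs \<sigma>) (vfun \<sigma>) \<in> Rat act1"
          using Mv_Rat[OF gr m1] unfolding Mv_def by blast
        hence xR: "x \<in> Rat act1" unfolding x_def by (rule Rat_sum[OF m1])
        have "f x = (\<Sum>\<sigma>\<in>S. act2 (f (xs \<sigma>)) (vfun \<sigma>))"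
          by (simp add: x_def hom_sum[OF hf] hom_act[OF hf])
        also have "\<dots> = (\<Sum>\<sigma>\<in>S. act2 y (vfun \<sigma>))"
        proof (rule sum.cong)
          fix \<sigma> assume "\<sigma> \<in> S"
          have mv: "act2 y (vfun \<sigma>) \<in> Mv act2 \<sigma>" unfolding Mv_def by (rule rangeI)
          have "act2 (f (xs \<sigma>)) (vfun \<sigma>) = act2 (act2 y (vfun \<sigma>)) (vfun \<sigma>)"
            using xs by metis
          also have "\<dots> = act2 y (vfun \<sigma>)" using Mv_proj[OF gr m2 mv, of \<sigma>] by simp
          finally show "act2 (f (xs \<sigma>)) (vfun \<sigma>) = act2 y (vfun \<sigma>)" .
        qed simp
        also have "\<dots> = y" by (rule ye[symmetric])
        finally show "y \<in> f ` Rat act1" using xR by (metis image_eqI)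
      qed
    qed
    have 5: "h ` Rat act2 = Rat act3"
    proof
      show "h ` Rat act2 \<subseteq> Rat act3" by (rule 2)
    next
      show "Rat act3 \<subseteq> h ` Rat act2"
      proof
        fix z assume z: "z \<in> Rat act3"
        obtain S where fS: "finite S" and ze: "z = (\<Sum>\<sigma>\<in>S. act3 z (vfun \<sigma>))"
          using Rat_decomp[OF m3 z] by blast
        obtain y where zy: "z = h y" using sh by (metis surjD)
        define Y where "Y = (\<Sum>\<sigma>\<in>S. act2 y (vfun \<sigma>))"
        have "\<forall>\<sigma>\<in>S. act2 y (vfun \<sigma>) \<in> Rat act2"
          using Mv_Rat[OF gr m2] unfolding Mv_def by blast
        hence YR: "Y \<in> Rat act2" unfolding Y_def by (rule Rat_sum[OF m2])
        have "h Y = (\<Sum>\<sigma>\<in>S. act3 (h y) (vfun \<sigma>))"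
          by (simp add: Y_def hom_sum[OF hh] hom_act[OF hh])
        also have "\<dots> = (\<Sum>\<sigma>\<in>S. act3 z (vfun \<sigma>))" by (simp only: zy)
        also have "\<dots> = z" by (rule ze[symmetric])
        finally show "z \<in> h ` Rat act2" using YR by (metis image_eqI)
      qed
    qed
    show "f ` Rat act1 \<subseteq> Rat act2 \<and> h ` Rat act2 \<subseteq> Rat act3 \<and>
          inj_on f (Rat act1) \<and>
          f ` Rat act1 = Rat act2 \<inter> {y. h y = 0} \<and>
          h ` Rat act2 = Rat act3" using 1 2 3 4 5 by blast
  qed
  show ?thesis using A B C D by blast
qed

end
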